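(* Let $\ell_1,\ell_2\in H_1(\mathbb{C}^2)$ be fixed, non-proportional linear forms. Then a general binary quartic $p\in H_4(\mathbb{C}^2)$ has exactly two representations $$p(x,y) = (t_1x^2+t_2xy+t_3y^2)^2 + t_4\,\ell_1(x,y)^4 + t_5\,\ell_2(x,y)^4, \qquad t_i\in\mathbb{C}.$$
   Context: $H_d(\mathbb{C}^n)$ denotes the complex vector space of homogeneous polynomials of degree $d$ in $n$ variables. "A general $p$ has property P" means P holds for all $p$ in a nonempty Zariski-open subset of $H_d(\mathbb{C}^n)$. Two representations are considered the same if they agree up to replacing the quadratic form by its negative. *)

theory Defs
  imports "HOL-Analysis.Analysis"
begin

inductive_set poly_fun :: "((complex ^ 'n) \<Rightarrow> complex) set" where
  pf_const: "(\<lambda>_. c) \<in> poly_fun"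
| pf_coord: "(\<lambda>x. x $ i) \<in> poly_fun"
| pf_add: "f \<in> poly_fun \<Longrightarrow> g \<in> poly_fun \<Longrightarrow> (\<lambda>x. f x + g x) \<in> poly_fun"
| pf_mult: "f \<in> poly_fun \<Longrightarrow> g \<in> poly_fun \<Longrightarrow> (\<lambda>x. f x * g x) \<in> poly_fun"

definition zariski_closed :: "(complex ^ 'n) set \<Rightarrow> bool" where
  "zariski_closed S \<longleftrightarrow> (\<exists>F \<subseteq> poly_fun. S = {x. \<forall>f\<in>F. f x = 0})"

definition zariski_open :: "(complex ^ 'n) set \<Rightarrow> bool" where
  "zariski_open U \<longleftrightarrow> zariski_closed (- U)"

text \<open>H_4(C^2) is identified with complex^5 via coefficients:
  p(x,y) = c0 x^4 + c1 x^3 y + c2 x^2 y^2 + c3 x y^3 + c4 y^4.\<close>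
definition quartic_eval :: "complex ^ 5 \<Rightarrow> complex \<Rightarrow> complex \<Rightarrow> complex" where
  "quartic_eval c x y = c $ 0 * x ^ 4 + c $ 1 * x ^ 3 * y + c $ 2 * x ^ 2 * y ^ 2
      + c $ 3 * x * y ^ 3 + c $ 4 * y ^ 4"

text \<open>H_1(C^2): a linear form l = (a,b) means l(x,y) = a x + b y.\<close>
definition lin_eval :: "complex \<times> complex \<Rightarrow> complex \<Rightarrow> complex \<Rightarrow> complex" where
  "lin_eval l x y = fst l * x + snd l * y"

definition reps :: "complex \<times> complex \<Rightarrow> complex \<times> complex \<Rightarrow> complex ^ 5
     \<Rightarrow> (complex \<times> complex \<times> complex \<times> complex \<times> complex) set" where
  "reps l1 l2 c = {(t1, t2, t3, t4, t5). \<forall>x y.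
      quartic_eval c x y = (t1 * x ^ 2 + t2 * x * y + t3 * y ^ 2) ^ 2
        + t4 * (lin_eval l1 x y) ^ 4 + t5 * (lin_eval l2 x y) ^ 4}"

text \<open>Representations are identified up to replacing the quadratic form by its
  negative; rep_class maps a tuple to its equivalence class.\<close>
fun rep_class :: "complex \<times> complex \<times> complex \<times> complex \<times> complex
     \<Rightarrow> (complex \<times> complex \<times> complex) set \<times> complex \<times> complex" where
  "rep_class (t1, t2, t3, t4, t5) = ({(t1, t2, t3), (-t1, -t2, -t3)}, t4, t5)"

end

theory Submission
  imports Defs "HOL-Computational_Algebra.Polynomial"
begin

lemma coeff_ext:
  fixes e0 e1 e2 e3 e4 :: complex
  assumes "\<forall>u v. e0 * u^4 + e1 * u^3 *  v + e2 * u^2 *  v^2 + e3 * u *  v^3 + e4 *  v^4 = 0"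
  shows "e0 = 0 \<and> e1 = 0 \<and> e2 = 0 \<and> e3 = 0 \<and> e4 = 0"
proof -
  let ?p = "[:e4, e3, e2, e1, e0:]"
  have "\<forall>u. poly ?p u = 0"
  proof
    fix u show "poly ?p u = 0" using assms[rule_format, of u 1]
      by (simp add: algebra_simps power2_eq_square power3_eq_cube power4_eq_xxxx)
  qed
  hence "?p = 0" using poly_all_0_iff_0 by blast
  thus ?thesis by simp
qed

definition P0 :: "complex \<Rightarrow> complex \<Rightarrow> complex \<Rightarrow> complex \<Rightarrow> complex^5 \<Rightarrow> complex" where
 "P0 a b e f c = c $ 0  *  (f^4) + c $ 1  *  ((-1) * e * f^3) + c $ 2  *  (e^2 * f^2) + c $ 3  *  ((-1) * e^3 * f) + c $ 4  *  (e^4)"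
definition P1 :: "complex \<Rightarrow> complex \<Rightarrow> complex \<Rightarrow> complex \<Rightarrow> complex^5 \<Rightarrow> complex" where
 "P1 a b e f c = c $ 0  *  ((-4) * b * f^3) + c $ 1  *  (3 * b * e * f^2 + a * f^3) + c $ 2  *  ((-2) * b * e^2 * f + (-2) * a * e * f^2) + c $ 3  *  (b * e^3 + 3 * a * e^2 * f) + c $ 4  *  ((-4) * a * e^3)"
definition P2 :: "complex \<Rightarrow> complex \<Rightarrow> complex \<Rightarrow> complex \<Rightarrow> complex^5 \<Rightarrow> complex" where
 "P2 a b e f c = c $ 0  *  (6 * b^2 * f^2) + c $ 1  *  ((-3) * b^2 * e * f + (-3) * a * b * f^2) + c $ 2  *  (b^2 * e^2 + 4 * a * b * e * f + a^2 * f^2) + c $ 3  *  ((-3) * a * b * e^2 + (-3) * a^2 * e * f) + c $ 4  *  (6 * a^2 * e^2)"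
definition P3 :: "complex \<Rightarrow> complex \<Rightarrow> complex \<Rightarrow> complex \<Rightarrow> complex^5 \<Rightarrow> complex" where
 "P3 a b e f c = c $ 0  *  ((-4) * b^3 * f) + c $ 1  *  (b^3 * e + 3 * a * b^2 * f) + c $ 2  *  ((-2) * a * b^2 * e + (-2) * a^2 * b * f) + c $ 3  *  (3 * a^2 * b * e + a^3 * f) + c $ 4  *  ((-4) * a^3 * e)"
definition P4 :: "complex \<Rightarrow> complex \<Rightarrow> complex \<Rightarrow> complex \<Rightarrow> complex^5 \<Rightarrow> complex" where
 "P4 a b e f c = c $ 0  *  (b^4) + c $ 1  *  ((-1) * a * b^3) + c $ 2  *  (a^2 * b^2) + c $ 3  *  ((-1) * a^3 * b) + c $ 4  *  (a^4)"

definition sg1 :: "complex \<Rightarrow> complex \<Rightarrow> complex \<Rightarrow> complex \<Rightarrow> complex \<Rightarrow> complex \<Rightarrow> complex \<Rightarrow> complex" where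
 "sg1 a b e f t1 t2 t3 = t1 * f^2 - t2 * f * e + t3 * e^2"
definition sg2 :: "complex \<Rightarrow> complex \<Rightarrow> complex \<Rightarrow> complex \<Rightarrow> complex \<Rightarrow> complex \<Rightarrow> complex \<Rightarrow> complex" where
 "sg2 a b e f t1 t2 t3 = -2 * b * f * t1 + (a * f + b * e) * t2 - 2 * a * e * t3"
definition sg3 :: "complex \<Rightarrow> complex \<Rightarrow> complex \<Rightarrow> complex \<Rightarrow> complex \<Rightarrow> complex \<Rightarrow> complex \<Rightarrow> complex" where
 "sg3 a b e f t1 t2 t3 = t1 * b^2 - t2 * b * a + t3 * a^2"

definition tau1 :: "complex \<Rightarrow> complex \<Rightarrow> complex \<Rightarrow> complex \<Rightarrow> complex \<Rightarrow> complex \<Rightarrow> complex \<Rightarrow> complex" where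
 "tau1 a b e f s1 s2 s3 = (s1 * a^2 + s2 * a * e + s3 * e^2) / (a * f-b * e)^2"
definition tau2 :: "complex \<Rightarrow> complex \<Rightarrow> complex \<Rightarrow> complex \<Rightarrow> complex \<Rightarrow> complex \<Rightarrow> complex \<Rightarrow> complex" where
 "tau2 a b e f s1 s2 s3 = (2 * s1 * a * b + s2 * (a * f + b * e) + 2 * s3 * e * f) / (a * f-b * e)^2"
definition tau3 :: "complex \<Rightarrow> complex \<Rightarrow> complex \<Rightarrow> complex \<Rightarrow> complex \<Rightarrow> complex \<Rightarrow> complex \<Rightarrow> complex" where
 "tau3 a b e f s1 s2 s3 = (s1 * b^2 + s2 * b * f + s3 * f^2) / (a * f-b * e)^2"

lemma qe_sub: "quartic_eval c (f * u - b *  v) (-e * u + a *  v) =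
   P0 a b e f c * u^4 + P1 a b e f c * u^3 *  v + P2 a b e f c * u^2 *  v^2 + P3 a b e f c * u *  v^3 + P4 a b e f c *  v^4"
  unfolding quartic_eval_def P0_def P1_def P2_def P3_def P4_def by algebra

lemma quad_sub: "t1 * (f * u - b *  v)^2 + t2 * (f * u - b *  v) * (-e * u + a *  v) + t3 * (-e * u + a *  v)^2 =
   sg1 a b e f t1 t2 t3 * u^2 + sg2 a b e f t1 t2 t3 * u *  v + sg3 a b e f t1 t2 t3 *  v^2"
  unfolding sg1_def sg2_def sg3_def by algebra

lemma lin_sub: "lin_eval (a,b) (f * u - b *  v) (-e * u + a *  v) = (a * f-b * e) * u"
   "lin_eval (e,f) (f * u - b *  v) (-e * u + a *  v) = (a * f-b * e) *  v"
  unfolding lin_eval_def by (simp_all add: algebra_simps)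

lemma sg_tau:
  assumes D: "a * f - b * e \<noteq> 0"
  shows "sg1 a b e f (tau1 a b e f s1 s2 s3) (tau2 a b e f s1 s2 s3) (tau3 a b e f s1 s2 s3) = s1"
    "sg2 a b e f (tau1 a b e f s1 s2 s3) (tau2 a b e f s1 s2 s3) (tau3 a b e f s1 s2 s3) = s2"
    "sg3 a b e f (tau1 a b e f s1 s2 s3) (tau2 a b e f s1 s2 s3) (tau3 a b e f s1 s2 s3) = s3"
  using D unfolding sg1_def sg2_def sg3_def tau1_def tau2_def tau3_def
  by (simp_all add: field_simps; algebra)+

lemma tau_sg:
  assumes D: "a * f - b * e \<noteq> 0"
  shows "tau1 a b e f (sg1 a b e f t1 t2 t3) (sg2 a b e f t1 t2 t3) (sg3 a b e f t1 t2 t3) = t1"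
    "tau2 a b e f (sg1 a b e f t1 t2 t3) (sg2 a b e f t1 t2 t3) (sg3 a b e f t1 t2 t3) = t2"
    "tau3 a b e f (sg1 a b e f t1 t2 t3) (sg2 a b e f t1 t2 t3) (sg3 a b e f t1 t2 t3) = t3"
  using D unfolding sg1_def sg2_def sg3_def tau1_def tau2_def tau3_def
  by (simp_all add: field_simps; algebra)+


lemma inv_sub1: assumes "(a*f - b*e::complex) \<noteq> 0" shows "f * ((a * x + b * y) / (a * f - b * e)) - b * ((e * x + f * y) / (a * f - b * e)) = x"
proof -
  have "f * ((a * x + b * y) / (a * f - b * e)) - b * ((e * x + f * y) / (a * f - b * e)) = (f*(a * x + b * y) - b*(e * x + f * y)) / (a * f - b * e)"
    by (simp add: diff_divide_distrib)
  also have "f*(a * x + b * y) - b*(e * x + f * y) = x * (a * f - b * e)" by (simp add: algebra_simps)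
  finally show ?thesis using assms by simp
qed

lemma inv_sub2: assumes "(a*f - b*e::complex) \<noteq> 0" shows "-e * ((a * x + b * y) / (a * f - b * e)) + a * ((e * x + f * y) / (a * f - b * e)) = y"
proof -
  have "-e * ((a * x + b * y) / (a * f - b * e)) + a * ((e * x + f * y) / (a * f - b * e)) = (-e*(a * x + b * y) + a*(e * x + f * y)) / (a * f - b * e)"
    by (simp only: times_divide_eq_right add_divide_distrib[symmetric])
  also have "-e*(a * x + b * y) + a*(e * x + f * y) = y * (a * f - b * e)" by (simp add: algebra_simps)
  finally show ?thesis using assms by simp
qed

lemma reps_char:
  assumes D: "a * f - b * e \<noteq> 0"
  shows "(t1,t2,t3,t4,t5) \<in> reps (a,b) (e,f) c \<longleftrightarrow>
    (2 * sg1 a b e f t1 t2 t3 * sg2 a b e f t1 t2 t3 = P1 a b e f c \<and>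
     sg2 a b e f t1 t2 t3 ^ 2 + 2 * sg1 a b e f t1 t2 t3 * sg3 a b e f t1 t2 t3 = P2 a b e f c \<and>
     2 * sg2 a b e f t1 t2 t3 * sg3 a b e f t1 t2 t3 = P3 a b e f c \<and>
     sg1 a b e f t1 t2 t3 ^ 2 + t4 * (a * f - b * e) ^ 4 = P0 a b e f c \<and>
     sg3 a b e f t1 t2 t3 ^ 2 + t5 * (a * f - b * e) ^ 4 = P4 a b e f c)"
    (is "?L \<longleftrightarrow> ?R")
proof -
  define D' where "D' = a * f - b * e"
  define s1 where "s1 = sg1 a b e f t1 t2 t3"
  define s2 where "s2 = sg2 a b e f t1 t2 t3"
  define s3 where "s3 = sg3 a b e f t1 t2 t3"
  have key: "\<And>u v. (quartic_eval c (f * u - b * v) (-e * u + a * v) =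
       (t1 * (f * u - b * v) ^ 2 + t2 * (f * u - b * v) * (-e * u + a * v) + t3 * (-e * u + a * v) ^ 2) ^ 2
        + t4 * (lin_eval (a,b) (f * u - b * v) (-e * u + a * v)) ^ 4 + t5 * (lin_eval (e,f) (f * u - b * v) (-e * u + a * v)) ^ 4)
     \<longleftrightarrow> (P0 a b e f c - s1^2 - t4 * D'^4) * u^4 + (P1 a b e f c - 2 * s1 * s2) * u^3 * v
         + (P2 a b e f c - s2^2 - 2 * s1 * s3) * u^2 * v^2 + (P3 a b e f c - 2 * s2 * s3) * u * v^3
         + (P4 a b e f c - s3^2 - t5 * D'^4) * v^4 = 0"
  proof -
    fix u v
    show "?thesis u v"
      unfolding qe_sub quad_sub lin_sub s1_def[symmetric] s2_def[symmetric] s3_def[symmetric] D'_def[symmetric]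
      by (simp add: algebra_simps power2_eq_square power3_eq_cube power4_eq_xxxx)
  qed
  show ?thesis
  proof
    assume L: ?L
    have "\<forall>u v. (P0 a b e f c - s1^2 - t4 * D'^4) * u^4 + (P1 a b e f c - 2 * s1 * s2) * u^3 * v
         + (P2 a b e f c - s2^2 - 2 * s1 * s3) * u^2 * v^2 + (P3 a b e f c - 2 * s2 * s3) * u * v^3
         + (P4 a b e f c - s3^2 - t5 * D'^4) * v^4 = 0"
      using L unfolding reps_def key[symmetric] by auto
    from coeff_ext[OF this] show ?R unfolding s1_def s2_def s3_def D'_def by (simp add: algebra_simps)
  next
    assume R: ?R
    have H: "\<And>u v. quartic_eval c (f * u - b * v) (-e * u + a * v) =
       (t1 * (f * u - b * v) ^ 2 + t2 * (f * u - b * v) * (-e * u + a * v) + t3 * (-e * u + a * v) ^ 2) ^ 2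
        + t4 * (lin_eval (a,b) (f * u - b * v) (-e * u + a * v)) ^ 4 + t5 * (lin_eval (e,f) (f * u - b * v) (-e * u + a * v)) ^ 4"
      unfolding key using R unfolding s1_def s2_def s3_def D'_def by (simp add: algebra_simps)
    show ?L unfolding reps_def
    proof (clarsimp)
      fix x y
      define u where "u = (a * x + b * y) / D'"
      define v where "v = (e * x + f * y) / D'"
      have D'0: "D' \<noteq> 0" using D D'_def by simp
      have "f * u - b * v = x"
        unfolding u_def v_def D'_def using inv_sub1[OF D] .
      moreover have "-e * u + a * v = y"
        unfolding u_def v_def D'_def using inv_sub2[OF D] .
      ultimately show "quartic_eval c x y = (t1 * x\<^sup>2 + t2 * x * y + t3 * y\<^sup>2)\<^sup>2 + t4 * (lin_eval (a, b) x y) ^ 4 + t5 * (lin_eval (e, f) x y) ^ 4"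
        using H[of u v] by simp
    qed
  qed
qed

lemma tau_neg:
  "tau1 a b e f (-x) (-y) (-z) = - tau1 a b e f x y z"
  "tau2 a b e f (-x) (-y) (-z) = - tau2 a b e f x y z"
  "tau3 a b e f (-x) (-y) (-z) = - tau3 a b e f x y z"
  unfolding tau1_def tau2_def tau3_def by (simp_all add: minus_divide_left algebra_simps)

lemma sg_neg:
  "sg2 a b e f (-x) (-y) (-z) = - sg2 a b e f x y z"
  unfolding sg2_def by (simp add: algebra_simps)

lemma count:
  fixes a b e f p0 p1 p2 p3 p4 :: complex
  assumes D: "a * f - b * e \<noteq> 0" and p1: "p1 \<noteq> 0" and p3: "p3 \<noteq> 0"
    and dl: "p2^2 - 2 * p1 * p3 \<noteq> 0"
    and R: "R = {(t1,t2,t3,t4,t5).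
     2 * sg1 a b e f t1 t2 t3 * sg2 a b e f t1 t2 t3 = p1 \<and>
     sg2 a b e f t1 t2 t3 ^ 2 + 2 * sg1 a b e f t1 t2 t3 * sg3 a b e f t1 t2 t3 = p2 \<and>
     2 * sg2 a b e f t1 t2 t3 * sg3 a b e f t1 t2 t3 = p3 \<and>
     sg1 a b e f t1 t2 t3 ^ 2 + t4 * (a * f - b * e) ^ 4 = p0 \<and>
     sg3 a b e f t1 t2 t3 ^ 2 + t5 * (a * f - b * e) ^ 4 = p4}"
  shows "card (rep_class ` R) = 2"
proof -
  define DD where "DD = a * f - b * e"
  have DD: "DD \<noteq> 0" using D DD_def by simp
  define sol where "sol r = (tau1 a b e f (p1/(2*r)) r (p3/(2*r)), tau2 a b e f (p1/(2*r)) r (p3/(2*r)),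
      tau3 a b e f (p1/(2*r)) r (p3/(2*r)), (p0 - (p1/(2*r))^2) / DD^4, (p4 - (p3/(2*r))^2) / DD^4)" for r
  define w1 where "w1 = (p2 + csqrt (p2^2 - 2 * p1 * p3)) / 2"
  define w2 where "w2 = (p2 - csqrt (p2^2 - 2 * p1 * p3)) / 2"
  define r1 where "r1 = csqrt w1"
  define r2 where "r2 = csqrt w2"
  have r1sq: "r1^2 = w1" unfolding r1_def by simp
  have r2sq: "r2^2 = w2" unfolding r2_def by simp
  have sq: "(csqrt (p2^2 - 2 * p1 * p3))^2 = p2^2 - 2 * p1 * p3" by simp
  have wsum: "w1 + w2 = p2" unfolding w1_def w2_def by (simp add: field_simps)
  have wprod: "w1 * w2 = p1 * p3 / 2" unfolding w1_def w2_def using sq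
    by (simp add: field_simps power2_eq_square; algebra)
  have wne: "w1 \<noteq> w2"
  proof
    assume "w1 = w2"
    hence "csqrt (p2^2 - 2 * p1 * p3) = 0" unfolding w1_def w2_def by (simp add: field_simps)
    hence "p2^2 - 2 * p1 * p3 = 0" using sq by simp
    with dl show False by simp
  qed
  have w1nz: "w1 \<noteq> 0" and w2nz: "w2 \<noteq> 0" using wprod p1 p3 by auto
  have solR: "sol r \<in> R" if rw: "r^2 = w1 \<or> r^2 = w2" for r
  proof -
    have rnz: "r \<noteq> 0" using rw w1nz w2nz by auto
    have m: "2 * (p1/(2*r)) * (p3/(2*r)) = (w1 * w2) / r^2"
      using rnz by (simp add: wprod field_simps power2_eq_square)
    have e2: "r^2 + 2 * (p1/(2*r)) * (p3/(2*r)) = p2"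
    proof (cases "r^2 = w1")
      case True
      then show ?thesis unfolding m using w1nz wsum by simp
    next
      case False
      then have "r^2 = w2" using rw by simp
      then show ?thesis unfolding m using w2nz wsum by (simp add: add.commute)
    qed
    show ?thesis unfolding sol_def R using sg_tau[OF D] e2 rnz DD DD_def by simp
  qed
  have Rsol: "\<exists>r\<in>{r1, -r1, r2, -r2}. t = sol r" if tR: "t \<in> R" for t
  proof -
    obtain t1 t2 t3 t4 t5 where t: "t = (t1,t2,t3,t4,t5)" by (cases t) auto
    define s1 where "s1 = sg1 a b e f t1 t2 t3"
    define s2 where "s2 = sg2 a b e f t1 t2 t3"
    define s3 where "s3 = sg3 a b e f t1 t2 t3"
    have E1: "2 * s1 * s2 = p1" and E2: "s2^2 + 2 * s1 * s3 = p2" and E3: "2 * s2 * s3 = p3"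
      and E4: "s1^2 + t4 * DD^4 = p0" and E5: "s3^2 + t5 * DD^4 = p4"
      using tR unfolding t R s1_def s2_def s3_def DD_def by auto
    have s2nz: "s2 \<noteq> 0" using E1 p1 by auto
    have s1e: "s1 = p1 / (2 * s2)" using E1 s2nz by (simp add: field_simps)
    have s3e: "s3 = p3 / (2 * s2)" using E3 s2nz by (simp add: field_simps)
    have t4e: "t4 = (p0 - s1^2) / DD^4" using E4 DD by (simp add: field_simps)
    have t5e: "t5 = (p4 - s3^2) / DD^4" using E5 DD by (simp add: field_simps)
    have "t1 = tau1 a b e f s1 s2 s3" "t2 = tau2 a b e f s1 s2 s3" "t3 = tau3 a b e f s1 s2 s3"
      unfolding s1_def s2_def s3_def using tau_sg[OF D] by simp_all
    hence tsol: "t = sol s2" unfolding t sol_def s1e[symmetric] s3e[symmetric] t4e t5e by simp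
    have "(s2^2 - w1) * (s2^2 - w2) = 0"
    proof -
      have "(s2^2 - w1) * (s2^2 - w2) = s2^2 * s2^2 - (w1 + w2) * s2^2 + w1 * w2" by (simp add: algebra_simps)
      also have "\<dots> = s2^2 * s2^2 - p2 * s2^2 + p1 * p3 / 2" using wsum wprod by simp
      also have "\<dots> = 0" unfolding E2[symmetric] E1[symmetric] E3[symmetric]
        by (simp add: algebra_simps power2_eq_square)
      finally show ?thesis .
    qed
    hence "s2^2 = r1^2 \<or> s2^2 = r2^2" using r1sq r2sq by auto
    hence "s2 \<in> {r1, -r1, r2, -r2}" using power2_eq_iff by blast
    with tsol show ?thesis by blast
  qed
  have Req: "R = sol ` {r1, -r1, r2, -r2}"
  proof
    show "R \<subseteq> sol ` {r1, -r1, r2, -r2}" using Rsol by blast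
    show "sol ` {r1, -r1, r2, -r2} \<subseteq> R" using solR r1sq r2sq by auto
  qed
  have cneg: "rep_class (sol (-r)) = rep_class (sol r)" for r
  proof -
    have m1: "p1 / (2 * - r) = - (p1 / (2 * r))" "p3 / (2 * - r) = - (p3 / (2 * r))" by simp_all
    show ?thesis unfolding sol_def m1 tau_neg by (simp add: insert_commute)
  qed
  have img: "rep_class ` R = {rep_class (sol r1), rep_class (sol r2)}"
    unfolding Req using cneg by auto
  have neq: "rep_class (sol r1) \<noteq> rep_class (sol r2)"
  proof
    assume h: "rep_class (sol r1) = rep_class (sol r2)"
    define A where "A = (tau1 a b e f (p1/(2*r1)) r1 (p3/(2*r1)), tau2 a b e f (p1/(2*r1)) r1 (p3/(2*r1)),
      tau3 a b e f (p1/(2*r1)) r1 (p3/(2*r1)))"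
    define B where "B = (tau1 a b e f (p1/(2*r2)) r2 (p3/(2*r2)), tau2 a b e f (p1/(2*r2)) r2 (p3/(2*r2)),
      tau3 a b e f (p1/(2*r2)) r2 (p3/(2*r2)))"
    have "A \<in> fst (rep_class (sol r1))" unfolding A_def sol_def by simp
    hence "A \<in> fst (rep_class (sol r2))" using h by simp
    hence "A = B \<or> A = (- fst B, - fst (snd B), - snd (snd B))" unfolding B_def sol_def by auto
    hence "sg2 a b e f (fst A) (fst (snd A)) (snd (snd A)) = sg2 a b e f (fst B) (fst (snd B)) (snd (snd B)) \<or>
           sg2 a b e f (fst A) (fst (snd A)) (snd (snd A)) = - sg2 a b e f (fst B) (fst (snd B)) (snd (snd B))"
      using sg_neg by auto
    hence "r1 = r2 \<or> r1 = - r2" unfolding A_def B_def using sg_tau[OF D] by simp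
    hence "r1^2 = r2^2" by auto
    with r1sq r2sq wne show False by simp
  qed
  show ?thesis unfolding img using neq by simp
qed

lemma pf_sub: "f \<in> poly_fun \<Longrightarrow> g \<in> poly_fun \<Longrightarrow> (\<lambda>x. f x - g x) \<in> poly_fun"
proof -
  assume f: "f \<in> poly_fun" and g: "g \<in> poly_fun"
  have "(\<lambda>x. f x + (\<lambda>_. -1) x * g x) \<in> poly_fun"
    by (intro poly_fun.pf_add poly_fun.pf_mult f g poly_fun.pf_const)
  thus ?thesis by simp
qed

lemma pf_pow: "f \<in> poly_fun \<Longrightarrow> (\<lambda>x. f x ^ n) \<in> poly_fun"
proof (induction n)
  case 0 then show ?case using poly_fun.pf_const[of 1] by simp
next
  case (Suc n)
  have "(\<lambda>x. f x * f x ^ n) \<in> poly_fun" using Suc by (intro poly_fun.pf_mult) auto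
  thus ?case by simp
qed

lemma pf_P:
  "P0 a b e f \<in> poly_fun" "P1 a b e f \<in> poly_fun" "P2 a b e f \<in> poly_fun"
  "P3 a b e f \<in> poly_fun" "P4 a b e f \<in> poly_fun"
proof -
  show "P0 a b e f \<in> poly_fun" unfolding P0_def[abs_def]
    by (intro poly_fun.pf_add poly_fun.pf_mult poly_fun.pf_coord poly_fun.pf_const)
  show "P1 a b e f \<in> poly_fun" unfolding P1_def[abs_def]
    by (intro poly_fun.pf_add poly_fun.pf_mult poly_fun.pf_coord poly_fun.pf_const)
  show "P2 a b e f \<in> poly_fun" unfolding P2_def[abs_def]
    by (intro poly_fun.pf_add poly_fun.pf_mult poly_fun.pf_coord poly_fun.pf_const)
  show "P3 a b e f \<in> poly_fun" unfolding P3_def[abs_def]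
    by (intro poly_fun.pf_add poly_fun.pf_mult poly_fun.pf_coord poly_fun.pf_const)
  show "P4 a b e f \<in> poly_fun" unfolding P4_def[abs_def]
    by (intro poly_fun.pf_add poly_fun.pf_mult poly_fun.pf_coord poly_fun.pf_const)
qed

lemma pf_g: "(\<lambda>c. P1 a b e f c * P3 a b e f c * ((P2 a b e f c)^2 - 2 * P1 a b e f c * P3 a b e f c)) \<in> poly_fun"
  by (intro poly_fun.pf_mult pf_sub pf_pow pf_P poly_fun.pf_const)

definition c0 :: "complex \<Rightarrow> complex \<Rightarrow> complex \<Rightarrow> complex \<Rightarrow> complex^5" where
  "c0 a b e f = (\<chi> i. if i = 0 then a * e^3 + a^3 * e
     else if i = 1 then b * e^3 + 3 * a * e^2 * f + 3 * a^2 * b * e + a^3 * f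
     else if i = 2 then 3 * b * e^2 * f + 3 * a * e * f^2 + 3 * a * b^2 * e + 3 * a^2 * b * f
     else if i = 3 then 3 * b * e * f^2 + b^3 * e + a * f^3 + 3 * a * b^2 * f
     else b * f^3 + b^3 * f)"

lemma c0_P:
  "P1 a b e f (c0 a b e f) = (a * f - b * e)^4"
  "P2 a b e f (c0 a b e f) = 0"
  "P3 a b e f (c0 a b e f) = (a * f - b * e)^4"
  unfolding P1_def P2_def P3_def c0_def by (simp_all; algebra)+


theorem theorem4p7:
  fixes l1 l2 :: "complex \<times> complex"
  assumes "fst l1 * snd l2 - snd l1 * fst l2 \<noteq> 0"
  shows "\<exists>U :: (complex ^ 5) set. zariski_open U \<and> U \<noteq> {} \<and>
           (\<forall>c\<in>U. card (rep_class ` reps l1 l2 c) = 2)"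
proof -
  obtain a b where l1: "l1 = (a, b)" by (cases l1) auto
  obtain e f where l2: "l2 = (e, f)" by (cases l2) auto
  have D: "a * f - b * e \<noteq> 0" using assms l1 l2 by simp
  define g where "g = (\<lambda>c. P1 a b e f c * P3 a b e f c * ((P2 a b e f c)^2 - 2 * P1 a b e f c * P3 a b e f c))"
  define U where "U = {c :: complex^5. g c \<noteq> 0}"
  have "zariski_open U"
    unfolding zariski_open_def zariski_closed_def
  proof (intro exI[of _ "{g}"] conjI)
    show "{g} \<subseteq> poly_fun" unfolding g_def using pf_g by simp
    show "- U = {x. \<forall>f\<in>{g}. f x = 0}" unfolding U_def by auto
  qed
  moreover have "c0 a b e f \<in> U" unfolding U_def g_def using D by (simp add: c0_P)
  hence "U \<noteq> {}" by auto
  moreover have "\<forall>c\<in>U. card (rep_class ` reps l1 l2 c) = 2"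
  proof
    fix c assume "c \<in> U"
    hence nz: "P1 a b e f c \<noteq> 0" "P3 a b e f c \<noteq> 0" "(P2 a b e f c)^2 - 2 * P1 a b e f c * P3 a b e f c \<noteq> 0"
      unfolding U_def g_def by auto
    have "reps (a,b) (e,f) c = {(t1,t2,t3,t4,t5).
     2 * sg1 a b e f t1 t2 t3 * sg2 a b e f t1 t2 t3 = P1 a b e f c \<and>
     sg2 a b e f t1 t2 t3 ^ 2 + 2 * sg1 a b e f t1 t2 t3 * sg3 a b e f t1 t2 t3 = P2 a b e f c \<and>
     2 * sg2 a b e f t1 t2 t3 * sg3 a b e f t1 t2 t3 = P3 a b e f c \<and>
     sg1 a b e f t1 t2 t3 ^ 2 + t4 * (a * f - b * e) ^ 4 = P0 a b e f c \<and>
     sg3 a b e f t1 t2 t3 ^ 2 + t5 * (a * f - b * e) ^ 4 = P4 a b e f c}" (is "_ = ?R")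
    proof (rule set_eqI)
      fix t :: "complex \<times> complex \<times> complex \<times> complex \<times> complex"
      obtain t1 t2 t3 t4 t5 where t: "t = (t1,t2,t3,t4,t5)" by (cases t) auto
      show "t \<in> reps (a,b) (e,f) c \<longleftrightarrow> t \<in> ?R" unfolding t reps_char[OF D] by simp
    qed
    from count[OF D nz this] show "card (rep_class ` reps l1 l2 c) = 2" unfolding l1 l2 .
  qed
  ultimately show ?thesis by blast
qed
end
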